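(* Let $C=U_d\cdots U_1$ be a Clifford circuit of depth $d$ on $n$ qubits, with $C_i=U_i\cdots U_1$ and $\mathcal C_i(s)=C_isC_i^\dagger$. For a set of qubits $A$ and an integer $w$, let $S_w^A$ be the set of phaseless Pauli operators $s\in\{I,X,Y,Z\}^{\otimes n}$ such that $\min_i|\mathcal C_i(s)|=w$ and, for every $i$, $\mathcal C_i(s)$ is supported only in $A$. Then $|S_w^A|\le d\binom{|A|}{w}3^w$.
   Context: $|P|$ denotes the weight of a Pauli operator $P$, i.e. the number of qubits on which it acts as a non-identity single-qubit Pauli (phases are ignored). The minimum and the support condition range over the timesteps $i=1,\dots,d$. *)

theory Defs
  imports Complex_Main "Jordan_Normal_Form.Matrix"
begin

datatype pauli = PI | PX | PY | PZ

definition pauli_mat1 :: "pauli \<Rightarrow> complex mat" where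
  "pauli_mat1 p = (case p of
      PI \<Rightarrow> mat_of_rows_list 2 [[1, 0], [0, 1]]
    | PX \<Rightarrow> mat_of_rows_list 2 [[0, 1], [1, 0]]
    | PY \<Rightarrow> mat_of_rows_list 2 [[0, -\<i>], [\<i>, 0]]
    | PZ \<Rightarrow> mat_of_rows_list 2 [[1, 0], [0, -1]])"

definition kron :: "complex mat \<Rightarrow> complex mat \<Rightarrow> complex mat" where
  "kron A B = mat (dim_row A * dim_row B) (dim_col A * dim_col B)
     (\<lambda>(i, j). A $$ (i div dim_row B, j div dim_col B) * B $$ (i mod dim_row B, j mod dim_col B))"

definition adj :: "complex mat \<Rightarrow> complex mat" where
  "adj A = mat (dim_col A) (dim_row A) (\<lambda>(i, j). cnj (A $$ (j, i)))"

definition unitary_mat :: "nat \<Rightarrow> complex mat \<Rightarrow> bool" where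
  "unitary_mat N U \<longleftrightarrow> U \<in> carrier_mat N N \<and> U * adj U = 1\<^sub>m N \<and> adj U * U = 1\<^sub>m N"

text \<open>A phaseless n-qubit Pauli operator is a string s, with s j the factor on qubit j (j < n);
  positions j \<ge> n are fixed to I.\<close>

definition paulis :: "nat \<Rightarrow> (nat \<Rightarrow> pauli) set" where
  "paulis n = {s. \<forall>j\<ge>n. s j = PI}"

fun pauli_mat :: "nat \<Rightarrow> (nat \<Rightarrow> pauli) \<Rightarrow> complex mat" where
  "pauli_mat 0 s = 1\<^sub>m 1"
| "pauli_mat (Suc n) s = kron (pauli_mat n s) (pauli_mat1 (s n))"

definition weight :: "nat \<Rightarrow> (nat \<Rightarrow> pauli) \<Rightarrow> nat" where
  "weight n s = card {j. j < n \<and> s j \<noteq> PI}"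

definition supported_in :: "(nat \<Rightarrow> pauli) \<Rightarrow> nat set \<Rightarrow> bool" where
  "supported_in s A \<longleftrightarrow> (\<forall>j. s j \<noteq> PI \<longrightarrow> j \<in> A)"

definition clifford :: "nat \<Rightarrow> complex mat \<Rightarrow> bool" where
  "clifford n U \<longleftrightarrow> unitary_mat (2 ^ n) U \<and>
     (\<forall>s\<in>paulis n. \<exists>t\<in>paulis n. \<exists>c::complex. U * pauli_mat n s * adj U = c \<cdot>\<^sub>m pauli_mat n t)"

definition conj_pauli :: "nat \<Rightarrow> complex mat \<Rightarrow> (nat \<Rightarrow> pauli) \<Rightarrow> (nat \<Rightarrow> pauli)" where
  "conj_pauli n U s = (THE t. t \<in> paulis n \<and>
      (\<exists>c::complex. U * pauli_mat n s * adj U = c \<cdot>\<^sub>m pauli_mat n t))"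

fun prefix :: "nat \<Rightarrow> (nat \<Rightarrow> complex mat) \<Rightarrow> nat \<Rightarrow> complex mat" where
  "prefix n U 0 = 1\<^sub>m (2 ^ n)"
| "prefix n U (Suc i) = U (Suc i) * prefix n U i"

definition S_set :: "nat \<Rightarrow> nat \<Rightarrow> (nat \<Rightarrow> complex mat) \<Rightarrow> nat set \<Rightarrow> nat \<Rightarrow> (nat \<Rightarrow> pauli) set" where
  "S_set n d U A w = {s \<in> paulis n.
      Min ((\<lambda>i. weight n (conj_pauli n (prefix n U i) s)) ` {1..d}) = w \<and>
      (\<forall>i\<in>{1..d}. supported_in (conj_pauli n (prefix n U i) s) A)}"

end

theory Submission imports Defs begin
lemma pauli1_dims[simp]: "dim_row (pauli_mat1 p) = 2" "dim_col (pauli_mat1 p) = 2"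
  by (simp_all add: pauli_mat1_def mat_of_rows_list_def split: pauli.split)
lemma pauli1_entries: "pauli_mat1 p $$ (0,0) = (case p of PI \<Rightarrow> 1 | PX \<Rightarrow> 0 | PY \<Rightarrow> 0 | PZ \<Rightarrow> 1)"
  "pauli_mat1 p $$ (0,1) = (case p of PI \<Rightarrow> 0 | PX \<Rightarrow> 1 | PY \<Rightarrow> -\<i> | PZ \<Rightarrow> 0)"
  "pauli_mat1 p $$ (1,0) = (case p of PI \<Rightarrow> 0 | PX \<Rightarrow> 1 | PY \<Rightarrow> \<i> | PZ \<Rightarrow> 0)"
  "pauli_mat1 p $$ (1,1) = (case p of PI \<Rightarrow> 1 | PX \<Rightarrow> 0 | PY \<Rightarrow> 0 | PZ \<Rightarrow> -1)"
  by (simp_all add: pauli_mat1_def mat_of_rows_list_def split: pauli.split)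

lemma kron_dim[simp]: "dim_row (kron A B) = dim_row A * dim_row B" "dim_col (kron A B) = dim_col A * dim_col B"
  by (auto simp: kron_def)

lemma pauli_dims[simp]: "dim_row (pauli_mat n s) = 2^n" "dim_col (pauli_mat n s) = 2^n"
  by (induction n) auto

lemma pauli_mat_dim[simp]: "pauli_mat n s \<in> carrier_mat (2^n) (2^n)"
  unfolding carrier_mat_def by (simp only: pauli_dims mem_Collect_eq simp_thms)

lemma kron_index: "i < dim_row A * dim_row B \<Longrightarrow> j < dim_col A * dim_col B \<Longrightarrow>
  kron A B $$ (i,j) = A $$ (i div dim_row B, j div dim_col B) * B $$ (i mod dim_row B, j mod dim_col B)"
  unfolding kron_def by (subst index_mat(1)) auto

lemma pauli_Suc_index: "i < 2^n \<Longrightarrow> j < 2^n \<Longrightarrow> a < 2 \<Longrightarrow> b < 2 \<Longrightarrow>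
  pauli_mat (Suc n) s $$ (i*2+a, j*2+b) = pauli_mat n s $$ (i,j) * pauli_mat1 (s n) $$ (a,b)"
proof -
  assume h: "i < 2^n" "j < 2^n" "a < 2" "b < 2"
  have r: "i*2+a < 2^n*2" "j*2+b < 2^n*2" using h by linarith+
  have d: "(i*2+a) div 2 = i" "(j*2+b) div 2 = j" "(i*2+a) mod 2 = a" "(j*2+b) mod 2 = b"
    using h by auto
  have "pauli_mat (Suc n) s = kron (pauli_mat n s) (pauli_mat1 (s n))" by simp
  also have "\<dots> $$ (i*2+a, j*2+b) = pauli_mat n s $$ ((i*2+a) div 2, (j*2+b) div 2) * pauli_mat1 (s n) $$ ((i*2+a) mod 2, (j*2+b) mod 2)"
    by (rule trans[OF kron_index]) (use r in \<open>simp_all only: pauli_dims pauli1_dims\<close>)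
  finally show ?thesis by (simp only: d)
qed

lemma pauli1_nz: "\<exists>a<2. \<exists>b<2. pauli_mat1 p $$ (a,b) \<noteq> 0"
proof (cases p)
  case PI then show ?thesis using pauli1_entries(1)[of p] by (intro exI[of _ 0] conjI exI[of _ 0]) auto
next
  case PX then show ?thesis using pauli1_entries(2)[of p] by (intro exI[of _ 0] conjI exI[of _ 1]) auto
next
  case PY then show ?thesis using pauli1_entries(2)[of p] by (intro exI[of _ 0] conjI exI[of _ 1]) auto
next
  case PZ then show ?thesis using pauli1_entries(1)[of p] by (intro exI[of _ 0] conjI exI[of _ 0]) auto
qed

lemma pauli1_inj: assumes "x \<noteq> 0" "\<forall>a<2. \<forall>b<2. x * pauli_mat1 p $$ (a,b) = y * pauli_mat1 q $$ (a,b)"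
  shows "p = q"
proof -
  have e: "x * pauli_mat1 p $$ (a,b) = y * pauli_mat1 q $$ (a,b)" if "a<2" "b<2" for a b using assms that by auto
  note e00 = e[of 0 0, unfolded pauli1_entries] and e01 = e[of 0 1, unfolded pauli1_entries]
   and e10 = e[of 1 0, unfolded pauli1_entries] and e11 = e[of 1 1, unfolded pauli1_entries]
  show ?thesis using assms(1) e00 e01 e10 e11
    by (cases p; cases q; auto)
qed

lemma pauli_nz: "\<exists>i<2^n. \<exists>j<2^n. pauli_mat n s $$ (i,j) \<noteq> 0"
proof (induction n)
  case 0 then show ?case by auto
next
  case (Suc n)
  then obtain i j where ij: "i<2^n" "j<2^n" "pauli_mat n s $$ (i,j) \<noteq> 0" by auto
  obtain a b where ab: "a<2" "b<2" "pauli_mat1 (s n) $$ (a,b) \<noteq> 0" using pauli1_nz by blast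
  have r: "i*2+a < 2^Suc n" "j*2+b < 2^Suc n" using ij ab by auto
  show ?case using r ij ab pauli_Suc_index[OF ij(1,2) ab(1,2), of s]
    by (intro exI[of _ "i*2+a"] conjI exI[of _ "j*2+b"]) auto
qed

lemma pauli_ne_zero: "pauli_mat n s \<noteq> 0\<^sub>m (2^n) (2^n)"
  using pauli_nz[of n s] by auto

lemma pauli_scal_inj: "c \<noteq> 0 \<Longrightarrow> c \<cdot>\<^sub>m pauli_mat n s = c' \<cdot>\<^sub>m pauli_mat n t \<Longrightarrow> \<forall>j<n. s j = t j"
proof (induction n arbitrary: c c')
  case 0 then show ?case by simp
next
  case (Suc n)
  have E: "c * (pauli_mat n s $$ (i,j) * pauli_mat1 (s n) $$ (a,b)) = c' * (pauli_mat n t $$ (i,j) * pauli_mat1 (t n) $$ (a,b))"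
    if h: "i < 2^n" "j < 2^n" "a < 2" "b < 2" for i j a b
  proof -
    have r: "i*2+a < 2^Suc n" "j*2+b < 2^Suc n" using h by auto
    have "(c \<cdot>\<^sub>m pauli_mat (Suc n) s) $$ (i*2+a, j*2+b) = (c' \<cdot>\<^sub>m pauli_mat (Suc n) t) $$ (i*2+a, j*2+b)"
      using Suc.prems(2) by simp
    then show ?thesis using r by (simp del: pauli_mat.simps add: pauli_Suc_index[OF h])
  qed
  obtain i0 j0 where ij: "i0<2^n" "j0<2^n" "pauli_mat n s $$ (i0,j0) \<noteq> 0" using pauli_nz by blast
  have sn: "s n = t n"
    by (rule pauli1_inj[of "c * pauli_mat n s $$ (i0,j0)" _ "c' * pauli_mat n t $$ (i0,j0)"])
       (use ij Suc.prems(1) E in \<open>auto simp: mult.assoc\<close>)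
  obtain a0 b0 where ab: "a0<2" "b0<2" "pauli_mat1 (s n) $$ (a0,b0) \<noteq> 0" using pauli1_nz by blast
  have "c \<cdot>\<^sub>m pauli_mat n s = c' \<cdot>\<^sub>m pauli_mat n t"
  proof (rule eq_matI)
    fix i j assume "i < dim_row (c' \<cdot>\<^sub>m pauli_mat n t)" "j < dim_col (c' \<cdot>\<^sub>m pauli_mat n t)"
    then have h: "i < 2^n" "j < 2^n" by auto
    have "(c * pauli_mat n s $$ (i,j)) * pauli_mat1 (s n) $$ (a0,b0) = (c' * pauli_mat n t $$ (i,j)) * pauli_mat1 (s n) $$ (a0,b0)"
      using E[OF h ab(1,2)] sn by (simp add: mult.assoc)
    then show "(c \<cdot>\<^sub>m pauli_mat n s) $$ (i,j) = (c' \<cdot>\<^sub>m pauli_mat n t) $$ (i,j)"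
      using ab(3) h by simp
  qed auto
  with Suc.IH[OF Suc.prems(1)] sn show ?case by (auto simp: less_Suc_eq)
qed

lemma adj_dims[simp]: "dim_row (adj A) = dim_col A" "dim_col (adj A) = dim_row A"
  by (simp_all add: adj_def)

lemma adj_carrier[simp]: "A \<in> carrier_mat N N \<Longrightarrow> adj A \<in> carrier_mat N N"
  by (rule carrier_matI) (auto dest: carrier_matD)

lemma adj_index: "i < dim_col A \<Longrightarrow> j < dim_row A \<Longrightarrow> adj A $$ (i,j) = cnj (A $$ (j,i))"
  unfolding adj_def by (subst index_mat(1)) auto

lemma adj_mult: assumes "dim_col A = dim_row B" shows "adj (A * B) = adj B * adj A"
proof (rule eq_matI)
  fix i j assume h: "i < dim_row (adj B * adj A)" "j < dim_col (adj B * adj A)"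
  then have h': "i < dim_col B" "j < dim_row A" by auto
  have "adj (A * B) $$ (i,j) = cnj ((A*B) $$ (j,i))" using h' by (simp add: adj_index)
  also have "\<dots> = (\<Sum>k<dim_col A. cnj (A $$ (j,k)) * cnj (B $$ (k,i)))"
    using h' assms by (simp add: scalar_prod_def atLeast0LessThan)
  also have "\<dots> = (adj B * adj A) $$ (i,j)"
    using h' assms by (simp add: scalar_prod_def atLeast0LessThan adj_index mult.commute)
  finally show "adj (A * B) $$ (i,j) = (adj B * adj A) $$ (i,j)" .
qed auto

lemma adj_adj[simp]: "adj (adj A) = A"
  by (rule eq_matI) (auto simp: adj_index)

lemma adj_one[simp]: "adj (1\<^sub>m N) = 1\<^sub>m N"
  by (rule eq_matI) (auto simp: adj_index)

lemma smult_smult_mat: "a \<cdot>\<^sub>m (b \<cdot>\<^sub>m M) = (a * b :: complex) \<cdot>\<^sub>m M"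
  by (rule eq_matI) auto

lemma zero_smult_mat: "(0::complex) \<cdot>\<^sub>m M = 0\<^sub>m (dim_row M) (dim_col M)"
  by (rule eq_matI) auto

lemma unitary_cancel:
  assumes V: "unitary_mat N V" and X: "X \<in> carrier_mat N N"
  shows "adj V * (V * X * adj V) * V = X"
proof -
  have Vc: "V \<in> carrier_mat N N" and a: "adj V * V = 1\<^sub>m N" and b: "V * adj V = 1\<^sub>m N"
    using V by (auto simp: unitary_mat_def)
  have Ac: "adj V \<in> carrier_mat N N" using Vc by simp
  have VX: "V * X \<in> carrier_mat N N" using Vc X by simp
  have VXA: "V * X * adj V \<in> carrier_mat N N" using VX Ac by simp
  have e1: "V * X * adj V * V = V * X"
    using assoc_mult_mat[OF VX Ac Vc] a right_mult_one_mat[OF VX] by simp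
  have "adj V * (V * X * adj V) * V = adj V * (V * X * adj V * V)"
    using assoc_mult_mat[OF Ac VXA Vc] .
  also have "\<dots> = adj V * (V * X)" by (simp only: e1)
  also have "\<dots> = (adj V * V) * X" using assoc_mult_mat[OF Ac Vc X] by simp
  also have "\<dots> = X" using a X by simp
  finally show ?thesis .
qed

lemma one_smult_mat'[simp]: "(1::complex) \<cdot>\<^sub>m M = M"
  by (rule eq_matI) auto

lemma conj_smult:
  assumes Vc: "V \<in> carrier_mat N N" and X: "X \<in> carrier_mat N N"
  shows "V * (k \<cdot>\<^sub>m X) * adj V = k \<cdot>\<^sub>m (V * X * adj V)"
  using Vc X by (simp add: mult_smult_distrib[of V N N X N] mult_smult_assoc_mat[of _ N N _ N])

lemma clifford_one: "clifford n (1\<^sub>m (2^n))"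
proof -
  have "unitary_mat (2^n) (1\<^sub>m (2^n))" by (simp add: unitary_mat_def)
  moreover have "1\<^sub>m (2^n) * pauli_mat n s * adj (1\<^sub>m (2^n)) = 1 \<cdot>\<^sub>m pauli_mat n s" for s
    by simp
  ultimately show ?thesis unfolding clifford_def by blast
qed

lemma clifford_mult:
  assumes U: "clifford n U" and V: "clifford n V"
  shows "clifford n (U * V)"
proof -
  let ?N = "2^n :: nat"
  have Uc: "U \<in> carrier_mat ?N ?N" and U1: "U * adj U = 1\<^sub>m ?N" and U2: "adj U * U = 1\<^sub>m ?N"
    using U by (auto simp: clifford_def unitary_mat_def)
  have Vc: "V \<in> carrier_mat ?N ?N" and V1: "V * adj V = 1\<^sub>m ?N" and V2: "adj V * V = 1\<^sub>m ?N"
    using V by (auto simp: clifford_def unitary_mat_def)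
  have AU: "adj U \<in> carrier_mat ?N ?N" and AV: "adj V \<in> carrier_mat ?N ?N" using Uc Vc by auto
  have adjUV: "adj (U * V) = adj V * adj U" using Uc Vc by (intro adj_mult) auto
  have UVc: "U * V \<in> carrier_mat ?N ?N" using Uc Vc by auto
  have VA: "adj V * adj U \<in> carrier_mat ?N ?N" using AV AU by (rule mult_carrier_mat)
  have "(U * V) * adj (U * V) = U * (V * (adj V * adj U))"
    unfolding adjUV by (rule assoc_mult_mat[OF Uc Vc VA])
  also have "V * (adj V * adj U) = (V * adj V) * adj U" by (rule assoc_mult_mat[OF Vc AV AU, symmetric])
  also have "\<dots> = adj U" unfolding V1 by (rule left_mult_one_mat[OF AU])
  finally have a: "(U * V) * adj (U * V) = 1\<^sub>m ?N" using U1 by simp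
  have "adj (U * V) * (U * V) = adj V * (adj U * (U * V))"
    unfolding adjUV by (rule assoc_mult_mat[OF AV AU UVc])
  also have "adj U * (U * V) = (adj U * U) * V" by (rule assoc_mult_mat[OF AU Uc Vc, symmetric])
  also have "\<dots> = V" unfolding U2 by (rule left_mult_one_mat[OF Vc])
  finally have b: "adj (U * V) * (U * V) = 1\<^sub>m ?N" using V2 by simp
  have c: "\<exists>t\<in>paulis n. \<exists>c::complex. (U * V) * pauli_mat n s * adj (U * V) = c \<cdot>\<^sub>m pauli_mat n t"
    if s: "s \<in> paulis n" for s
  proof -
    obtain t c where t: "t \<in> paulis n" and tc: "V * pauli_mat n s * adj V = c \<cdot>\<^sub>m pauli_mat n t"
      using V s unfolding clifford_def by blast
    obtain t' c' where t': "t' \<in> paulis n" and tc': "U * pauli_mat n t * adj U = c' \<cdot>\<^sub>m pauli_mat n t'"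
      using U t unfolding clifford_def by blast
    have P: "pauli_mat n s \<in> carrier_mat ?N ?N" by simp
    have VP: "V * pauli_mat n s \<in> carrier_mat ?N ?N" using Vc P by (rule mult_carrier_mat)
    have VPA: "V * pauli_mat n s * adj V \<in> carrier_mat ?N ?N" using VP AV by (rule mult_carrier_mat)
    have UVP: "U * V * pauli_mat n s \<in> carrier_mat ?N ?N" using UVc P by (rule mult_carrier_mat)
    have e1: "(U * V) * pauli_mat n s * adj (U * V) = ((U * V) * pauli_mat n s * adj V) * adj U"
      unfolding adjUV by (rule assoc_mult_mat[OF UVP AV AU, symmetric])
    have e2: "(U * V) * pauli_mat n s = U * (V * pauli_mat n s)" by (rule assoc_mult_mat[OF Uc Vc P])
    have e3: "U * (V * pauli_mat n s) * adj V = U * (V * pauli_mat n s * adj V)"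
      by (rule assoc_mult_mat[OF Uc VP AV])
    have "(U * V) * pauli_mat n s * adj (U * V) = U * (V * pauli_mat n s * adj V) * adj U"
      by (subst e1, subst e2, subst e3, rule refl)
    also have "\<dots> = c \<cdot>\<^sub>m (U * pauli_mat n t * adj U)" unfolding tc
      by (rule conj_smult[OF Uc]) simp
    also have "\<dots> = (c * c') \<cdot>\<^sub>m pauli_mat n t'" unfolding tc' by (simp add: smult_smult_mat)
    finally show ?thesis using t' by blast
  qed
  show ?thesis unfolding clifford_def unitary_mat_def using a b c UVc by blast
qed

lemma clifford_prefix: "\<forall>i\<in>{1..d}. clifford n (U i) \<Longrightarrow> i \<le> d \<Longrightarrow> clifford n (prefix n U i)"
proof (induction i)
  case 0 then show ?case by (simp add: clifford_one)
next
  case (Suc i) then show ?case by (simp add: clifford_mult)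
qed

lemma conj_nonzero:
  assumes V: "clifford n V" and s: "s \<in> paulis n" and e: "V * pauli_mat n s * adj V = c \<cdot>\<^sub>m pauli_mat n t"
  shows "c \<noteq> 0"
proof
  assume c0: "c = 0"
  have Vu: "unitary_mat (2^n) V" using V by (simp add: clifford_def)
  have Vc: "V \<in> carrier_mat (2^n) (2^n)" using Vu by (simp add: unitary_mat_def)
  have "pauli_mat n s = adj V * (V * pauli_mat n s * adj V) * V"
    using unitary_cancel[OF Vu, of "pauli_mat n s"] by simp
  also have "\<dots> = 0\<^sub>m (2^n) (2^n)" unfolding e c0 zero_smult_mat using Vc by simp
  finally show False using pauli_ne_zero by blast
qed

lemma conj_pauli_spec:
  assumes V: "clifford n V" and s: "s \<in> paulis n"
  shows "conj_pauli n V s \<in> paulis n \<and> (\<exists>c. V * pauli_mat n s * adj V = c \<cdot>\<^sub>m pauli_mat n (conj_pauli n V s))"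
proof -
  have ex: "\<exists>t. t \<in> paulis n \<and> (\<exists>c::complex. V * pauli_mat n s * adj V = c \<cdot>\<^sub>m pauli_mat n t)"
    using V s unfolding clifford_def by blast
  have un: "t = t'" if h1: "t \<in> paulis n \<and> (\<exists>c::complex. V * pauli_mat n s * adj V = c \<cdot>\<^sub>m pauli_mat n t)"
    and h2: "t' \<in> paulis n \<and> (\<exists>c::complex. V * pauli_mat n s * adj V = c \<cdot>\<^sub>m pauli_mat n t')" for t t'
  proof -
    obtain c c' where c: "V * pauli_mat n s * adj V = c \<cdot>\<^sub>m pauli_mat n t"
      and c': "V * pauli_mat n s * adj V = c' \<cdot>\<^sub>m pauli_mat n t'" using h1 h2 by blast
    have "c \<noteq> 0" using conj_nonzero[OF V s c] .
    then have "\<forall>j<n. t j = t' j" using pauli_scal_inj c c' by metis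
    moreover have "\<forall>j\<ge>n. t j = t' j" using h1 h2 by (simp add: paulis_def)
    ultimately show ?thesis by (metis ext not_le)
  qed
  have "\<exists>!t. t \<in> paulis n \<and> (\<exists>c::complex. V * pauli_mat n s * adj V = c \<cdot>\<^sub>m pauli_mat n t)"
    using ex un by blast
  then show ?thesis unfolding conj_pauli_def by (rule theI')
qed

lemma conj_pauli_inj:
  assumes V: "clifford n V"
  shows "inj_on (conj_pauli n V) (paulis n)"
proof (rule inj_onI)
  fix s s' assume s: "s \<in> paulis n" and s': "s' \<in> paulis n" and eq: "conj_pauli n V s = conj_pauli n V s'"
  let ?t = "conj_pauli n V s"
  obtain c where c: "V * pauli_mat n s * adj V = c \<cdot>\<^sub>m pauli_mat n ?t" using conj_pauli_spec[OF V s] by blast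
  obtain c' where c': "V * pauli_mat n s' * adj V = c' \<cdot>\<^sub>m pauli_mat n ?t" using conj_pauli_spec[OF V s'] eq by auto
  have c'0: "c' \<noteq> 0" using conj_nonzero[OF V s' c'] .
  have Vu: "unitary_mat (2^n) V" using V by (simp add: clifford_def)
  have Vc: "V \<in> carrier_mat (2^n) (2^n)" using Vu by (simp add: unitary_mat_def)
  have AVc: "adj V \<in> carrier_mat (2^n) (2^n)" using Vc by simp
  have X: "V * pauli_mat n s' * adj V \<in> carrier_mat (2^n) (2^n)"
    using Vc AVc by (intro mult_carrier_mat[of _ _ "2^n"]) auto
  have "V * pauli_mat n s * adj V = (c / c') \<cdot>\<^sub>m (V * pauli_mat n s' * adj V)"
    unfolding c c' using c'0 by (simp add: smult_smult_mat)
  then have "pauli_mat n s = adj V * ((c / c') \<cdot>\<^sub>m (V * pauli_mat n s' * adj V)) * V"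
    using unitary_cancel[OF Vu, of "pauli_mat n s"] by simp
  also have "\<dots> = (c / c') \<cdot>\<^sub>m (adj V * (V * pauli_mat n s' * adj V) * adj (adj V))"
    using conj_smult[OF AVc X, of "c / c'"] by (simp add: adj_adj)
  also have "\<dots> = (c / c') \<cdot>\<^sub>m pauli_mat n s'" using unitary_cancel[OF Vu, of "pauli_mat n s'"] by (simp add: adj_adj)
  finally have "1 \<cdot>\<^sub>m pauli_mat n s = (c / c') \<cdot>\<^sub>m pauli_mat n s'" by simp
  then have "\<forall>j<n. s j = s' j" using pauli_scal_inj[of 1] by simp
  moreover have "\<forall>j\<ge>n. s j = s' j" using s s' by (simp add: paulis_def)
  ultimately show "s = s'" by (metis ext not_le)
qed

definition Tset :: "nat \<Rightarrow> nat set \<Rightarrow> nat \<Rightarrow> (nat \<Rightarrow> pauli) set" where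
  "Tset n A w = {t. supported_in t A \<and> weight n t = w}"

lemma pauli4: "p \<noteq> PI \<Longrightarrow> p \<noteq> PX \<Longrightarrow> p \<noteq> PY \<Longrightarrow> p = PZ"
  by (cases p) auto

lemma pauli_cases3: "p \<noteq> PI \<Longrightarrow> p \<in> {PX, PY, PZ}"
  by (cases p) auto

lemma card_Tset:
  assumes A: "A \<subseteq> {0..<n}"
  shows "finite (Tset n A w) \<and> card (Tset n A w) \<le> (card A choose w) * 3 ^ w"
proof -
  have fA: "finite A" using A finite_subset by blast
  define Bs where "Bs = {B. B \<subseteq> A \<and> card B = w}"
  define F :: "nat set \<Rightarrow> (nat \<Rightarrow> pauli) set" where "F B = (\<lambda>g j. if j \<in> B then g j else PI) ` (\<Pi>\<^sub>E j\<in>B. {PX, PY, PZ})" for B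
  have sub: "Tset n A w \<subseteq> (\<Union>B\<in>Bs. F B)"
  proof
    fix t assume t: "t \<in> Tset n A w"
    define B where "B = {j. t j \<noteq> PI}"
    have BA: "B \<subseteq> A" using t by (auto simp: B_def Tset_def supported_in_def)
    have "{j. j < n \<and> t j \<noteq> PI} = B" using BA A by (auto simp: B_def)
    then have "card B = w" using t by (simp add: Tset_def weight_def)
    then have "B \<in> Bs" using BA by (simp add: Bs_def)
    moreover have "t \<in> F B"
    proof -
      have "restrict t B \<in> (\<Pi>\<^sub>E j\<in>B. {PX, PY, PZ})" by (auto simp: B_def intro: pauli4)
      moreover have "t = (\<lambda>j. if j \<in> B then restrict t B j else PI)" by (auto simp: B_def)
      ultimately show ?thesis unfolding F_def by blast
    qed
    ultimately show "t \<in> (\<Union>B\<in>Bs. F B)" by blast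
  qed
  have fBs: "finite Bs" by (rule finite_subset[of _ "Pow A"]) (use fA in \<open>auto simp: Bs_def\<close>)
  have cBs: "card Bs = card A choose w" unfolding Bs_def by (rule n_subsets[OF fA])
  have fF: "finite (F B)" and cF: "card (F B) \<le> 3 ^ w" if "B \<in> Bs" for B
  proof -
    have fB: "finite B" using that fA unfolding Bs_def by (auto intro: finite_subset)
    have cB: "card B = w" using that unfolding Bs_def by auto
    have fP: "finite (\<Pi>\<^sub>E j\<in>B. {PX, PY, PZ})" using fB by (intro finite_PiE) auto
    show "finite (F B)" unfolding F_def using fP by simp
    have "card (F B) \<le> card (\<Pi>\<^sub>E j\<in>B. {PX, PY, PZ})" unfolding F_def using fP by (rule card_image_le)
    also have "\<dots> = card {PX, PY, PZ} ^ card B" using fB by (simp add: card_PiE)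
    also have "\<dots> = 3 ^ w" using cB by (simp add: numeral_3_eq_3)
    finally show "card (F B) \<le> 3 ^ w" .
  qed
  have fU: "finite (\<Union>B\<in>Bs. F B)" using fBs fF by blast
  have "card (Tset n A w) \<le> card (\<Union>B\<in>Bs. F B)" using fU sub by (rule card_mono)
  also have "\<dots> \<le> (\<Sum>B\<in>Bs. card (F B))" using fBs by (rule card_UN_le)
  also have "\<dots> \<le> (\<Sum>B\<in>Bs. 3 ^ w)" using cF by (rule sum_mono)
  also have "\<dots> = (card A choose w) * 3 ^ w" using cBs by simp
  finally show ?thesis using fU sub finite_subset by blast
qed

theorem lemma4:
  fixes n d w :: nat and U :: "nat \<Rightarrow> complex mat" and A :: "nat set"
  assumes "d \<ge> 1"
    and "\<forall>i\<in>{1..d}. clifford n (U i)"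
    and "A \<subseteq> {0..<n}"
  shows "card (S_set n d U A w) \<le> d * (card A choose w) * 3 ^ w"
proof -
  let ?f = "\<lambda>i. conj_pauli n (prefix n U i)"
  let ?T = "Tset n A w"
  define G where "G i = {s \<in> paulis n. ?f i s \<in> ?T}" for i
  have T: "finite ?T" "card ?T \<le> (card A choose w) * 3 ^ w" using card_Tset[OF assms(3)] by auto
  have sub: "S_set n d U A w \<subseteq> (\<Union>i\<in>{1..d}. G i)"
  proof
    fix s assume s: "s \<in> S_set n d U A w"
    let ?W = "(\<lambda>i. weight n (?f i s)) ` {1..d}"
    have sS: "s \<in> paulis n \<and> Min ?W = w \<and> (\<forall>i\<in>{1..d}. supported_in (?f i s) A)"
      using s unfolding S_set_def mem_Collect_eq .
    have ne: "?W \<noteq> {}" using assms(1) by (simp only: image_is_empty atLeastatMost_empty_iff) simp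
    have "Min ?W \<in> ?W" by (rule Min_in[OF _ ne]) (rule finite_imageI, rule finite_atLeastAtMost)
    then obtain i where i: "i \<in> {1..d}" "weight n (?f i s) = w" using sS by (auto simp del: atLeastAtMost_iff)
    have "supported_in (?f i s) A" using sS i by blast
    then have "s \<in> G i" unfolding G_def Tset_def mem_Collect_eq using sS i by blast
    then show "s \<in> (\<Union>i\<in>{1..d}. G i)" using i by blast
  qed
  have Gi: "finite (G i) \<and> card (G i) \<le> card ?T" if i: "i \<in> {1..d}" for i
  proof -
    have cl: "clifford n (prefix n U i)" by (rule clifford_prefix[OF assms(2)]) (use i in simp)
    have inj: "inj_on (?f i) (G i)"
      by (rule inj_on_subset[OF conj_pauli_inj[OF cl]]) (simp add: G_def)
    have im: "?f i ` G i \<subseteq> ?T" unfolding G_def by blast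
    show ?thesis using inj_on_finite[OF inj im T(1)] card_inj_on_le[OF inj im T(1)] by blast
  qed
  have fU: "finite (\<Union>i\<in>{1..d}. G i)"
    by (rule finite_UN_I[OF finite_atLeastAtMost]) (use Gi in blast)
  have "card (S_set n d U A w) \<le> card (\<Union>i\<in>{1..d}. G i)"
    by (rule card_mono[OF fU sub])
  also have "\<dots> \<le> (\<Sum>i\<in>{1..d}. card (G i))" by (rule card_UN_le[OF finite_atLeastAtMost])
  also have "\<dots> \<le> (\<Sum>i\<in>{1..d}. card ?T)" by (rule sum_mono) (use Gi in blast)
  also have "\<dots> = d * card ?T" by simp
  also have "\<dots> \<le> d * ((card A choose w) * 3 ^ w)" using T(2) by simp
  finally show ?thesis by (simp add: mult.assoc)
qed

end
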